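(* Let $Q=(q_n)_{n\ge1}$ be a basic sequence that is infinite in limit, let $F$ be a $Q$-special sequence, and let $(a,b,1)\in S_Q$. Then the finite sequence $y_{F,a,b}=\left(\frac{F_{(a,b,c)}}{q_{\phi_Q(a,b,c)}}\right)_{c=1}^a$ is an almost-arithmetic progression-$\left(\frac1a,\frac1a\right)$, and its star discrepancy satisfies $D^*(y_{F,a,b})\le\frac2a$.
   Context: A basic sequence is a sequence $Q=(q_n)_{n\ge1}$ of integers with $q_n\ge 2$; it is infinite in limit if $q_n\to\infty$. $\mathbb{N}$ denotes the positive integers. For each positive integer $j$ let $\nu_j=\min\{N : q_m\ge 2j^2 \text{ for all } m\ge N\}$. Define $l_1=\max(\nu_2-1,1)$ and, recursively for $i\ge 2$, $l_i=\max\big(\min\{k\in\mathbb{N} : l_1+2l_2+\cdots+(i-1)l_{i-1}+ik\ge \nu_{i+1}-1\},1\big)$. Put $L_i=\sum_{j=1}^i jl_j$ (with $L_0=0$). Let $S_Q=\{(a,b,c)\in\mathbb{N}^3 : b\le l_a,\ c\le a\}$ and $\phi_Q(a,b,c)=L_{a-1}+(b-1)a+c$; $\phi_Q$ is a bijection $S_Q\to\mathbb{N}$. A $Q$-special sequence is a family of integers $F=(F_{(a,b,c)})_{(a,b,c)\in S_Q}$ with $F_{(a,b,1)}=0$ for all $(a,b,1)\in S_Q$ and $\frac{F_{(a,b,c)}}{q_{\phi_Q(a,b,c)}}\in\left[\frac{c-1}{a}-\frac{1}{2a^2},\frac{c-1}{a}+\frac{1}{2a^2}\right]$ for $(a,b,c)\in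 S_Q$ with $c>1$. For $0\le\delta<1$ and $\varepsilon>0$, a finite sequence $x_1<x_2<\cdots<x_N$ in $[0,1)$ is an almost-arithmetic progression-$(\delta,\varepsilon)$ if there is $\eta$ with $0<\eta\le\varepsilon$ such that $0\le x_1\le\eta+\delta\eta$; $\eta-\delta\eta\le x_{n+1}-x_n\le\eta+\delta\eta$ for $1\le n\le N-1$; and $1-\eta-\delta\eta\le x_N<1$. For a finite sequence $z=(z_1,\dots,z_n)$ in $[0,1)$, its star discrepancy is $D^*(z)=\sup_{0<\gamma\le1}\left|\frac{\#\{k\le n: z_k\in[0,\gamma)\}}{n}-\gamma\right|$. *)

theory Defs
  imports "HOL-Analysis.Analysis"
begin

text \<open>Sequences are indexed from 1; the value at index 0 is irrelevant.\<close>

definition basic_seq :: "(nat \<Rightarrow> nat) \<Rightarrow> bool" where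
  "basic_seq q \<longleftrightarrow> (\<forall>n\<ge>1. q n \<ge> 2)"

definition infinite_in_limit :: "(nat \<Rightarrow> nat) \<Rightarrow> bool" where
  "infinite_in_limit q \<longleftrightarrow> filterlim q at_top sequentially"

definition nuQ :: "(nat \<Rightarrow> nat) \<Rightarrow> nat \<Rightarrow> nat" where
  "nuQ q j = (LEAST N. N \<ge> 1 \<and> (\<forall>m\<ge>N. q m \<ge> 2 * j^2))"

fun lL :: "(nat \<Rightarrow> nat) \<Rightarrow> nat \<Rightarrow> nat \<times> nat" where
  "lL q 0 = (0, 0)"
| "lL q (Suc 0) = (let l1 = max (nuQ q 2 - 1) 1 in (l1, l1))"
| "lL q (Suc (Suc n)) =
     (let i = Suc (Suc n); Lp = snd (lL q (Suc n));
          k = max (LEAST k. k \<ge> 1 \<and> Lp + i * k \<ge> nuQ q (i + 1) - 1) 1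
      in (k, Lp + i * k))"

definition lQ :: "(nat \<Rightarrow> nat) \<Rightarrow> nat \<Rightarrow> nat" where
  "lQ q i = fst (lL q i)"

definition LQ :: "(nat \<Rightarrow> nat) \<Rightarrow> nat \<Rightarrow> nat" where
  "LQ q i = snd (lL q i)"

definition SQ :: "(nat \<Rightarrow> nat) \<Rightarrow> (nat \<times> nat \<times> nat) set" where
  "SQ q = {(a, b, c). a \<ge> 1 \<and> b \<ge> 1 \<and> c \<ge> 1 \<and> b \<le> lQ q a \<and> c \<le> a}"

definition phiQ :: "(nat \<Rightarrow> nat) \<Rightarrow> nat \<times> nat \<times> nat \<Rightarrow> nat" where
  "phiQ q t = (case t of (a, b, c) \<Rightarrow> LQ q (a - 1) + (b - 1) * a + c)"

definition Q_special :: "(nat \<Rightarrow> nat) \<Rightarrow> (nat \<times> nat \<times> nat \<Rightarrow> int) \<Rightarrow> bool" where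
  "Q_special q F \<longleftrightarrow>
     (\<forall>a b. (a, b, 1) \<in> SQ q \<longrightarrow> F (a, b, 1) = 0) \<and>
     (\<forall>a b c. (a, b, c) \<in> SQ q \<and> c > 1 \<longrightarrow>
        real_of_int (F (a, b, c)) / real (q (phiQ q (a, b, c)))
          \<in> {(real c - 1) / real a - 1 / (2 * real a ^ 2) ..
             (real c - 1) / real a + 1 / (2 * real a ^ 2)})"

text \<open>Finite sequence x_1, ..., x_N given as x :: nat => real on indices 1..N.\<close>
definition almost_AP :: "real \<Rightarrow> real \<Rightarrow> nat \<Rightarrow> (nat \<Rightarrow> real) \<Rightarrow> bool" where
  "almost_AP \<delta> \<epsilon> N x \<longleftrightarrow>
     N \<ge> 1 \<and>
     (\<forall>n\<in>{1..N}. 0 \<le> x n \<and> x n < 1) \<and>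
     (\<forall>n\<in>{1..<N}. x n < x (n + 1)) \<and>
     (\<exists>\<eta>. 0 < \<eta> \<and> \<eta> \<le> \<epsilon> \<and>
        0 \<le> x 1 \<and> x 1 \<le> \<eta> + \<delta> * \<eta> \<and>
        (\<forall>n\<in>{1..N-1}. \<eta> - \<delta> * \<eta> \<le> x (n + 1) - x n \<and> x (n + 1) - x n \<le> \<eta> + \<delta> * \<eta>) \<and>
        1 - \<eta> - \<delta> * \<eta> \<le> x N \<and> x N < 1)"

definition star_discrepancy :: "nat \<Rightarrow> (nat \<Rightarrow> real) \<Rightarrow> real" where
  "star_discrepancy n z =
     (SUP \<gamma>\<in>{0<..1}. \<bar>real (card {k\<in>{1..n}. z k < \<gamma>}) / real n - \<gamma>\<bar>)"

end

theory Submission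
  imports Defs
begin

theorem mainTheorem14:
  fixes q :: "nat \<Rightarrow> nat" and F :: "nat \<times> nat \<times> nat \<Rightarrow> int" and a b :: nat
  assumes "basic_seq q" and "infinite_in_limit q"
    and "Q_special q F"
    and "(a, b, 1) \<in> SQ q"
  shows "almost_AP (1 / real a) (1 / real a) a
           (\<lambda>c. real_of_int (F (a, b, c)) / real (q (phiQ q (a, b, c))))
       \<and> star_discrepancy a
           (\<lambda>c. real_of_int (F (a, b, c)) / real (q (phiQ q (a, b, c)))) \<le> 2 / real a"
proof -
  define x where "x = (\<lambda>c. real_of_int (F (a, b, c)) / real (q (phiQ q (a, b, c))))"
  have a1: "a \<ge> 1" and bl: "b \<ge> 1" "b \<le> lQ q a" using assms(4) by (auto simp: SQ_def)
  have apos: "real a > 0" using a1 by simp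
  have x1: "x 1 = 0" using assms(3,4) by (simp add: x_def Q_special_def)
  have hb: "(real c - 1) / real a - 1 / (2 * real a ^ 2) \<le> x c \<and>
            x c \<le> (real c - 1) / real a + 1 / (2 * real a ^ 2)" if "c \<in> {1..a}" for c
  proof (cases "c = 1")
    case True
    then show ?thesis using x1 apos by simp
  next
    case False
    then have "(a, b, c) \<in> SQ q" "c > 1" using that a1 bl by (auto simp: SQ_def)
    then show ?thesis using assms(3) unfolding Q_special_def x_def by auto
  qed
  have lo: "real a * x c \<ge> real c - 1 - 1 / (2 * real a)" if "c \<in> {1..a}" for c
  proof -
    have "real a * ((real c - 1) / real a - 1 / (2 * real a ^ 2)) \<le> real a * x c"
      using hb[OF that] apos by (intro mult_left_mono) auto
    moreover have "real a * ((real c - 1) / real a - 1 / (2 * real a ^ 2)) = real c - 1 - 1 / (2 * real a)"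
      using apos by (simp add: field_simps power2_eq_square)
    ultimately show ?thesis by simp
  qed
  have hi: "real a * x c \<le> real c - 1 + 1 / (2 * real a)" if "c \<in> {1..a}" for c
  proof -
    have "real a * x c \<le> real a * ((real c - 1) / real a + 1 / (2 * real a ^ 2))"
      using hb[OF that] apos by (intro mult_left_mono) auto
    moreover have "real a * ((real c - 1) / real a + 1 / (2 * real a ^ 2)) = real c - 1 + 1 / (2 * real a)"
      using apos by (simp add: field_simps power2_eq_square)
    ultimately show ?thesis by simp
  qed
  have ha2: "1 / (2 * real a) \<le> 1/2" using a1 by (simp add: field_simps)
  have mono: "x k < x j" if "k \<in> {1..a}" "j \<in> {1..a}" "k < j" for k j
  proof -
    have "real a * x k < real a * x j"
    proof -
      have "a \<ge> 2" using that by auto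
      then have "1 / (2 * real a) \<le> 1/4" by (simp add: field_simps)
      moreover have "real k + 1 \<le> real j" using that by simp
      ultimately show ?thesis using lo[OF that(2)] hi[OF that(1)] by linarith
    qed
    then show ?thesis using apos by simp
  qed
  have mono': "x k \<le> x j" if "k \<in> {1..a}" "j \<in> {1..a}" "k \<le> j" for k j
    using mono[OF that(1,2)] that(3) by (cases "k = j") auto
  have P1: "almost_AP (1 / real a) (1 / real a) a x"
    unfolding almost_AP_def
  proof (intro conjI ballI exI[of _ "1 / real a"])
    show "1 \<le> a" by fact
    fix n assume n: "n \<in> {1..a}"
    show "0 \<le> x n" using mono'[of 1 n] n x1 a1 by auto
    show "x n < 1"
    proof -
      have "real a * x n < real a * 1"
      proof -
        have "real n \<le> real a" using n by simp
        then show ?thesis using hi[OF n] ha2 by linarith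
      qed
      then show ?thesis using apos by simp
    qed
  next
    fix n assume n: "n \<in> {1..<a}"
    show "x n < x (n + 1)" using mono[of n "n+1"] n by auto
  next
    show "0 < 1 / real a" using apos by simp
    show "1 / real a \<le> 1 / real a" by simp
    show "0 \<le> x 1" using x1 by simp
    show "x 1 \<le> 1 / real a + 1 / real a * (1 / real a)" using x1 apos by simp
  next
    fix n assume n: "n \<in> {1..a - 1}"
    then have n1: "n \<in> {1..a}" "n + 1 \<in> {1..a}" by auto
    have d1: "real a * (x (n+1) - x n) \<ge> 1 - 1 / real a"
      using lo[OF n1(2)] hi[OF n1(1)] apos by (simp add: field_simps)
    have d2: "real a * (x (n+1) - x n) \<le> 1 + 1 / real a"
      using lo[OF n1(1)] hi[OF n1(2)] apos by (simp add: field_simps)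
    show "1 / real a - 1 / real a * (1 / real a) \<le> x (n + 1) - x n"
    proof -
      have "real a * (1 / real a - 1 / real a * (1 / real a)) = 1 - 1 / real a"
        using apos by (simp add: field_simps)
      then show ?thesis using d1 apos
        by (metis mult_le_cancel_left_pos)
    qed
    show "x (n + 1) - x n \<le> 1 / real a + 1 / real a * (1 / real a)"
    proof -
      have "real a * (1 / real a + 1 / real a * (1 / real a)) = 1 + 1 / real a"
        using apos by (simp add: field_simps)
      then show ?thesis using d2 apos
        by (metis mult_le_cancel_left_pos)
    qed
  next
    have n: "a \<in> {1..a}" using a1 by simp
    show "1 - 1 / real a - 1 / real a * (1 / real a) \<le> x a"
    proof -
      have "real a * (1 - 1 / real a - 1 / real a * (1 / real a)) = real a - 1 - 1 / real a"
        using apos by (simp add: field_simps)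
      moreover have "1 / (2 * real a) \<le> 1 / real a" using apos by (simp add: field_simps)
      ultimately have "real a * (1 - 1 / real a - 1 / real a * (1 / real a)) \<le> real a * x a"
        using lo[OF n] by linarith
      then show ?thesis using apos by (simp only: mult_le_cancel_left_pos)
    qed
    show "x a < 1"
    proof -
      have "real a * x a < real a * 1"
        using hi[OF n] ha2 by linarith
      then show ?thesis using apos by simp
    qed
  qed
  have P2: "star_discrepancy a x \<le> 2 / real a"
    unfolding star_discrepancy_def
  proof (rule cSUP_least)
    show "{0<..(1::real)} \<noteq> {}" by simp
    fix \<gamma> :: real assume g: "\<gamma> \<in> {0<..1}"
    define S where "S = {k\<in>{1..a}. x k < \<gamma>}"
    have finS: "finite S" unfolding S_def by simp
    have oneS: "1 \<in> S" using g x1 a1 by (simp add: S_def)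
    define m where "m = Max S"
    have mS: "m \<in> S" using finS oneS unfolding m_def by (intro Max_in) auto
    have Seq: "S = {1..m}"
    proof
      show "S \<subseteq> {1..m}" using finS by (auto simp: m_def S_def)
      show "{1..m} \<subseteq> S"
      proof
        fix k assume k: "k \<in> {1..m}"
        then have "k \<in> {1..a}" using mS by (auto simp: S_def)
        moreover have "x k \<le> x m" using mono'[of k m] k mS by (auto simp: S_def)
        ultimately show "k \<in> S" using mS by (auto simp: S_def)
      qed
    qed
    have cS: "card S = m" using Seq by simp
    have m1: "m \<in> {1..a}" "x m < \<gamma>" using mS by (auto simp: S_def)
    have "\<bar>real m / real a - \<gamma>\<bar> \<le> 2 / real a"
    proof (cases "m < a")
      case True
      then have m2: "m + 1 \<in> {1..a}" by simp
      have "m + 1 \<notin> S" using Seq by simp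
      then have "x (m+1) \<ge> \<gamma>" using m2 by (auto simp: S_def)
      then have "real a * \<gamma> \<le> real a * x (m+1)"
        using apos by (intro mult_left_mono) auto
      then have "real a * \<gamma> \<le> real m + 1 / (2 * real a)"
        using hi[OF m2] by simp
      moreover have "real a * x m < real a * \<gamma>"
        using m1(2) apos by (intro mult_strict_left_mono) auto
      then have "real a * \<gamma> > real m - 1 - 1 / (2 * real a)"
        using lo[OF m1(1)] by linarith
      ultimately have "\<bar>real m - real a * \<gamma>\<bar> \<le> 2" using ha2 by linarith
      then have "\<bar>real m / real a - \<gamma>\<bar> * real a \<le> 2"
        using apos by (simp add: field_simps abs_mult flip: abs_of_pos)
      then show ?thesis using apos by (simp add: field_simps)
    next
      case False
      then have ma: "m = a" using m1 by simp
      have "real a * x m < real a * \<gamma>"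
        using m1(2) apos by (intro mult_strict_left_mono) auto
      then have "real a * \<gamma> > real a - 1 - 1 / (2 * real a)"
        using lo[OF m1(1)] ma by linarith
      moreover have "real a * \<gamma> \<le> real a" using g apos by simp
      ultimately have "\<bar>real m - real a * \<gamma>\<bar> \<le> 2" using ha2 ma by linarith
      then have "\<bar>real m / real a - \<gamma>\<bar> * real a \<le> 2"
        using apos by (simp add: field_simps abs_mult flip: abs_of_pos)
      then show ?thesis using apos by (simp add: field_simps)
    qed
    then show "\<bar>real (card {k\<in>{1..a}. x k < \<gamma>}) / real a - \<gamma>\<bar> \<le> 2 / real a"
      using cS by (simp add: S_def)
  qed
  show ?thesis using P1 P2 unfolding x_def by simp
qed

end
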